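(* In the setting described in the context, if a linear operator $T:\mathcal{H}\to\mathcal{H}$ is compact and $\psi_z\to0$ weakly in $H_2$ as $z\to\infty$, then $T$ is weakly compact.
   Context: Setting: $H_1,H_2$ are separable Hilbert spaces, $G$ is a separable locally compact group with left Haar measure $dz$. $\{E_N\}_{N\in\mathbb{N}}$ is a fixed sequence of open precompact subsets of $G$ with $E_N\subseteq E_{N+1}$, $E_N^{-1}=E_N$, $E_NE_N\subseteq E_{2N}$, $\bigcup_NE_N=G$. $\{\psi_z\}_{z\in G}\subseteq H_2$ is a bounded, norm-continuous family forming a continuous Parseval frame: $\langle f,g\rangle_{H_2}=\int_G\langle f,\psi_z\rangle\langle\psi_z,g\rangle\,dz$. $\mathcal{H}=H_1\widehat\otimes H_2$ is the Hilbert space tensor product. For $f\in\mathcal{H}$, $g\in H_2$, $\langle f,g\rangle_{H_2}\in H_1$ is the continuous extension of $\sum c_na_n\otimes b_n\mapsto\sum c_na_n\langle b_n,g\rangle_{H_2}$. For linear $T$ on $\mathcal{H}$ and $z,w\in G$, $T_{(z,w)}h:=\langle T(h\otimes\psi_z),\psi_w\rangle_{H_2}$ for $h\in H_1$. $T$ is weakly compact if each $T_{(z,w)}$ is compact on $H_1$ and for every $M>0$, $\lim_{z\to\infty}\sup_{w\in zE_M}\|T_{(z,w)}\|_{H_1\to H_1}=0$; here $z\to\infty$ means $z$ eventually leaves every compact subset of $G$. *)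

theory Defs
  imports "HOL-Analysis.Analysis"
begin

text \<open>The inner product is linear in the first
argument and conjugate linear in the second; the norm is the one induced by it.\<close>

class complex_vector = real_vector +
  fixes scaleC :: "complex \<Rightarrow> 'a \<Rightarrow> 'a"
  assumes scaleC_add_right: "scaleC a (x + y) = scaleC a x + scaleC a y"
    and scaleC_add_left: "scaleC (a + b) x = scaleC a x + scaleC b x"
    and scaleC_scaleC: "scaleC a (scaleC b x) = scaleC (a * b) x"
    and scaleC_one: "scaleC 1 x = x"
    and scaleR_scaleC: "scaleR r x = scaleC (complex_of_real r) x"

class complex_inner = complex_vector + real_normed_vector +
  fixes cinner :: "'a \<Rightarrow> 'a \<Rightarrow> complex"
  assumes cinner_commute: "cinner x y = cnj (cinner y x)"
    and cinner_add_left: "cinner (x + y) z = cinner x z + cinner y z"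
    and cinner_scaleC_left: "cinner (scaleC r x) y = r * cinner x y"
    and cinner_pos: "Im (cinner x x) = 0 \<and> Re (cinner x x) \<ge> 0"
    and cinner_eq_zero_iff: "cinner x x = 0 \<longleftrightarrow> x = 0"
    and norm_eq_sqrt_cinner: "norm x = sqrt (Re (cinner x x))"

class chilbert_space = complex_inner + complete_space

definition clinear :: "('a::complex_vector \<Rightarrow> 'b::complex_vector) \<Rightarrow> bool" where
  "clinear f \<longleftrightarrow> (\<forall>x y. f (x + y) = f x + f y) \<and> (\<forall>c x. f (scaleC c x) = scaleC c (f x))"

definition cspan :: "'a::complex_vector set \<Rightarrow> 'a set" where
  "cspan S = {x. \<exists>F c. finite F \<and> F \<subseteq> S \<and> x = (\<Sum>v\<in>F. scaleC (c v) v)}"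

definition compact_operator :: "('a::complex_inner \<Rightarrow> 'b::complex_inner) \<Rightarrow> bool" where
  "compact_operator T \<longleftrightarrow> clinear T \<and> compact (closure (T ` ball 0 1))"

definition separable_type :: "'a::topological_space itself \<Rightarrow> bool" where
  "separable_type _ \<longleftrightarrow> (\<exists>D::'a set. countable D \<and> closure D = UNIV)"

text \<open>\<open>tp\<close> realises the Hilbert space tensor product \<open>H1 \<otimes> H2\<close> inside the Hilbert
space \<open>'h\<close>: it is bilinear, satisfies \<open>\<langle>a\<otimes>b, c\<otimes>d\<rangle> = \<langle>a,c\<rangle>\<langle>b,d\<rangle>\<close>, and the span of the
elementary tensors is dense. This determines \<open>'h\<close> up to a unique unitary isomorphism
compatible with \<open>\<otimes>\<close>.\<close>

definition is_hilbert_tensor ::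
  "('a::chilbert_space \<Rightarrow> 'b::chilbert_space \<Rightarrow> 'h::chilbert_space) \<Rightarrow> bool" where
  "is_hilbert_tensor tp \<longleftrightarrow>
     (\<forall>a a' b. tp (a + a') b = tp a b + tp a' b) \<and>
     (\<forall>a b b'. tp a (b + b') = tp a b + tp a b') \<and>
     (\<forall>c a b. tp (scaleC c a) b = scaleC c (tp a b)) \<and>
     (\<forall>c a b. tp a (scaleC c b) = scaleC c (tp a b)) \<and>
     (\<forall>a b c d. cinner (tp a b) (tp c d) = cinner a c * cinner b d) \<and>
     closure (cspan (range (\<lambda>(a, b). tp a b))) = UNIV"

definition partial_inner ::
  "('a::chilbert_space \<Rightarrow> 'b::chilbert_space \<Rightarrow> 'h::chilbert_space) \<Rightarrow> 'h \<Rightarrow> 'b \<Rightarrow> 'a" where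
  "partial_inner tp f g =
     (THE L. clinear L \<and> continuous_on UNIV L \<and>
             (\<forall>a b. L (tp a b) = scaleC (cinner b g) a)) f"

definition T_zw ::
  "('a::chilbert_space \<Rightarrow> 'b::chilbert_space \<Rightarrow> 'h::chilbert_space) \<Rightarrow> ('g \<Rightarrow> 'b)
     \<Rightarrow> ('h \<Rightarrow> 'h) \<Rightarrow> 'g \<Rightarrow> 'g \<Rightarrow> 'a \<Rightarrow> 'a" where
  "T_zw tp \<psi> T z w = (\<lambda>h. partial_inner tp (T (tp h (\<psi> z))) (\<psi> w))"

text \<open>The group is written additively (class \<open>group_add\<close>, not necessarily commutative):
\<open>z + e\<close> is the group product \<open>ze\<close> and \<open>- e\<close> the inverse.\<close>

definition locally_compact_group :: "'g::{group_add, t2_space} itself \<Rightarrow> bool" where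
  "locally_compact_group _ \<longleftrightarrow>
     continuous_on UNIV (\<lambda>p::'g \<times> 'g. fst p + snd p) \<and>
     continuous_on UNIV (uminus :: 'g \<Rightarrow> 'g) \<and>
     (\<forall>x::'g. \<exists>U K. open U \<and> compact K \<and> x \<in> U \<and> U \<subseteq> K)"

definition is_left_haar :: "'g::{group_add, t2_space} measure \<Rightarrow> bool" where
  "is_left_haar \<mu> \<longleftrightarrow>
     sets \<mu> = sets borel \<and>
     (\<forall>x A. A \<in> sets borel \<longrightarrow> emeasure \<mu> ((\<lambda>y. x + y) ` A) = emeasure \<mu> A) \<and>
     (\<forall>K. compact K \<longrightarrow> emeasure \<mu> K < \<infinity>) \<and>
     (\<forall>U. open U \<and> U \<noteq> {} \<longrightarrow> emeasure \<mu> U > 0) \<and>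
     (\<forall>A \<in> sets borel. emeasure \<mu> A = (INF U \<in> {U. open U \<and> A \<subseteq> U}. emeasure \<mu> U)) \<and>
     (\<forall>U. open U \<longrightarrow> emeasure \<mu> U = (SUP K \<in> {K. compact K \<and> K \<subseteq> U}. emeasure \<mu> K))"

text \<open>The fixed sequence \<open>E\<^sub>N\<close>, \<open>N \<ge> 1\<close> (the value at \<open>0\<close> is irrelevant).\<close>

definition exhausting_seq :: "(nat \<Rightarrow> 'g::{group_add, topological_space} set) \<Rightarrow> bool" where
  "exhausting_seq E \<longleftrightarrow>
     (\<forall>N\<ge>1. open (E N) \<and> compact (closure (E N)) \<and> E N \<subseteq> E (Suc N) \<and>
             uminus ` E N = E N \<and> {x + y | x y. x \<in> E N \<and> y \<in> E N} \<subseteq> E (2 * N)) \<and>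
     (\<Union>N\<in>{1..}. E N) = UNIV"

definition cont_parseval_frame :: "'g::{group_add, t2_space} measure \<Rightarrow> ('g \<Rightarrow> 'b::chilbert_space) \<Rightarrow> bool" where
  "cont_parseval_frame \<mu> \<psi> \<longleftrightarrow>
     bounded (range \<psi>) \<and> continuous_on UNIV \<psi> \<and>
     (\<forall>f g. integrable \<mu> (\<lambda>z. cinner f (\<psi> z) * cinner (\<psi> z) g) \<and>
            cinner f g = (LINT z|\<mu>. cinner f (\<psi> z) * cinner (\<psi> z) g))"

text \<open>The filter \<open>z \<rightarrow> \<infinity>\<close>: eventually outside every compact set.\<close>

definition cocompact :: "'a::topological_space filter" where
  "cocompact = (INF K \<in> {K. compact K}. principal (- K))"

definition weakly_compact ::
  "('a::chilbert_space \<Rightarrow> 'b::chilbert_space \<Rightarrow> 'h::chilbert_space) \<Rightarrow> ('g::{group_add, t2_space} \<Rightarrow> 'b)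
     \<Rightarrow> (nat \<Rightarrow> 'g set) \<Rightarrow> ('h \<Rightarrow> 'h) \<Rightarrow> bool" where
  "weakly_compact tp \<psi> E T \<longleftrightarrow>
     (\<forall>z w. compact_operator (T_zw tp \<psi> T z w)) \<and>
     (\<forall>M\<ge>1. \<forall>\<epsilon>>0. eventually (\<lambda>z. \<forall>w \<in> (\<lambda>e. z + e) ` E M. onorm (T_zw tp \<psi> T z w) \<le> \<epsilon>) cocompact)"

end

theory Submission
  imports Defs
begin


lemma cinner_add_right: "cinner x (y + z) = cinner x y + cinner (x::'a::complex_inner) z"
  by (metis cinner_add_left cinner_commute complex_cnj_add)

lemma cinner_scaleC_right: "cinner x (scaleC r y) = cnj r * cinner (x::'a::complex_inner) y"
  by (metis cinner_scaleC_left cinner_commute complex_cnj_mult)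

lemma cinner_zero_left[simp]: "cinner 0 (y::'a::complex_inner) = 0"
  using cinner_add_left[of 0 0 y] by simp

lemma cinner_zero_right[simp]: "cinner (x::'a::complex_inner) 0 = 0"
  using cinner_add_right[of x 0 0] by simp

lemma cinner_minus_left: "cinner (- x) (y::'a::complex_inner) = - cinner x y"
  using cinner_add_left[of x "-x" y] by (simp add: add_eq_0_iff)

lemma cinner_minus_right: "cinner x (- y::'a::complex_inner) = - cinner x y"
  using cinner_add_right[of x y "-y"] by (simp add: add_eq_0_iff)

lemma cinner_diff_left: "cinner (x - y) (z::'a::complex_inner) = cinner x z - cinner y z"
  using cinner_add_left[of x "-y" z] by (simp add: cinner_minus_left)

lemma cinner_diff_right: "cinner x (y - z::'a::complex_inner) = cinner x y - cinner x z"
  using cinner_add_right[of x y "-z"] by (simp add: cinner_minus_right)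

lemma cinner_self: "cinner x x = complex_of_real ((norm (x::'a::complex_inner))^2)"
  using cinner_pos[of x] norm_eq_sqrt_cinner[of x] by (simp add: complex_eq_iff)

lemma scaleC_zero_right[simp]: "scaleC c (0::'a::complex_vector) = 0"
  using scaleC_add_right[of c 0 0] by simp

lemma scaleC_zero_left[simp]: "scaleC 0 (x::'a::complex_vector) = 0"
  using scaleC_add_left[of 0 0 x] by simp

lemma scaleR_as_C: "scaleR r x = scaleC (complex_of_real r) (x::'a::complex_vector)"
  by (rule scaleR_scaleC)

lemma norm_scaleC: "norm (scaleC c x) = cmod c * norm (x::'a::complex_inner)"
proof -
  have "cinner (scaleC c x) (scaleC c x) = (c * cnj c) * cinner x x"
    by (simp add: cinner_scaleC_left cinner_scaleC_right)
  then have "complex_of_real ((norm (scaleC c x))^2) = complex_of_real ((cmod c)^2 * (norm x)^2)"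
    by (simp only: cinner_self complex_norm_square[symmetric] of_real_mult)
  then have "(norm (scaleC c x))^2 = (cmod c * norm x)^2" by (simp only: of_real_eq_iff power_mult_distrib)
  then show ?thesis by (rule power2_eq_imp_eq) auto
qed


lemma cinner_expand:
  fixes x n :: "'a::complex_inner"
  shows "cinner (x + scaleC t n) (x + scaleC t n) =
     cinner x x + cnj t * cinner x n + t * cnj (cinner x n) + t * cnj t * cinner n n"
proof -
  have c: "cinner n x = cnj (cinner x n)" by (rule cinner_commute)
  show ?thesis
    by (simp add: cinner_add_left cinner_add_right cinner_scaleC_left cinner_scaleC_right c algebra_simps)
qed

lemma proj_identity:
  fixes x n :: "'a::complex_inner"
  assumes "n \<noteq> 0"
  shows "(norm (x + scaleC (- (cinner x n / complex_of_real ((norm n)^2))) n))^2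
         = (norm x)^2 - (cmod (cinner x n))^2 / (norm n)^2"
proof -
  define a where "a = cinner x n"
  define N where "N = (norm n)^2"
  have N: "N > 0" using assms by (simp add: N_def)
  have "complex_of_real ((norm (x + scaleC (- (a / of_real N)) n))^2) =
     of_real ((norm x)^2) + cnj (- (a / of_real N)) * a + (- (a / of_real N)) * cnj a
       + (- (a / of_real N)) * cnj (- (a / of_real N)) * of_real N"
    by (simp only: cinner_self[symmetric] cinner_expand a_def N_def)
  also have "\<dots> = of_real ((norm x)^2) - a * cnj a / of_real N"
    using N by (simp add: field_simps)
  also have "\<dots> = of_real ((norm x)^2 - (cmod a)^2 / N)"
    using complex_norm_square[of a] by simp
  finally show ?thesis unfolding a_def N_def by (simp only: of_real_eq_iff)
qed

lemma cauchy_schwarz: "cmod (cinner x y) \<le> norm x * norm (y::'a::complex_inner)"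
proof (cases "y = 0")
  case True then show ?thesis by simp
next
  case False
  have "0 \<le> (norm x)^2 - (cmod (cinner x y))^2 / (norm y)^2"
    using proj_identity[OF False, of x] by (metis zero_le_power2)
  then have "(cmod (cinner x y))^2 \<le> (norm x * norm y)^2"
    using False by (simp add: field_simps power_mult_distrib)
  then show ?thesis by (rule power2_le_imp_le) simp
qed

lemma parallelogram:
  "(norm (x + y))^2 + (norm (x - y))^2 = 2 * (norm x)^2 + 2 * (norm (y::'a::complex_inner))^2"
proof -
  have "cinner (x+y) (x+y) + cinner (x-y) (x-y) = 2 * cinner x x + 2 * cinner y y"
    by (simp add: cinner_add_left cinner_add_right cinner_diff_left cinner_diff_right algebra_simps)
  then have "complex_of_real ((norm (x + y))^2 + (norm (x - y))^2)
       = complex_of_real (2 * (norm x)^2 + 2 * (norm y)^2)"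
    by (simp add: cinner_self)
  then show ?thesis by (simp only: of_real_eq_iff)
qed

lemma cinner_ext:
  fixes v w :: "'a::complex_inner"
  assumes "\<And>a. cinner a v = cinner a w"
  shows "v = w"
proof -
  have "cinner (v - w) (v - w) = 0"
    using assms[of "v - w"] by (simp add: cinner_diff_right)
  then show ?thesis by (simp add: cinner_eq_zero_iff)
qed

lemma add_zero_fun:
  fixes f :: "'a::monoid_add \<Rightarrow> 'b::ab_group_add"
  assumes "\<And>x y. f (x + y) = f x + f y"
  shows "f 0 = (0::'b::ab_group_add)"
  using assms[of 0 0] by simp

lemma add_diff_fun:
  assumes "\<And>x y. f (x + y) = f x + f (y::'a::ab_group_add)"
  shows "f (x - y) = f x - (f y::'b::ab_group_add)"
  using assms[of "x - y" y] by (simp add: algebra_simps)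

lemma add_sum_fun:
  assumes "\<And>x y. f (x + y) = f x + f y"
  shows "f (\<Sum>v\<in>F. h v) = (\<Sum>v\<in>F. f (h v)::'b::ab_group_add)"
proof (induction F rule: infinite_finite_induct)
  case (infinite A) then show ?case using add_zero_fun[OF assms] by simp
next
  case empty then show ?case using add_zero_fun[OF assms] by simp
next
  case (insert x F) then show ?case by (simp add: assms)
qed

lemma riesz:
  fixes \<phi> :: "'h::chilbert_space \<Rightarrow> complex"
  assumes add: "\<And>x y. \<phi> (x + y) = \<phi> x + \<phi> y"
    and sc: "\<And>c x. \<phi> (scaleC c x) = c * \<phi> x"
    and bd: "\<And>x. cmod (\<phi> x) \<le> K * norm x"
  shows "\<exists>v. \<forall>x. \<phi> x = cinner x v"
proof (cases "\<forall>x. \<phi> x = 0")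
  case True then show ?thesis by (intro exI[of _ 0]) simp
next
  case False
  then obtain x1 where x1: "\<phi> x1 \<noteq> 0" by auto
  have bl: "bounded_linear \<phi>"
  proof (rule bounded_linear_intro[where K=K])
    show "\<phi> (x + y) = \<phi> x + \<phi> y" for x y by (rule add)
    show "\<phi> (r *\<^sub>R x) = r *\<^sub>R \<phi> x" for r x by (simp add: scaleR_as_C sc scaleR_conv_of_real)
    show "norm (\<phi> x) \<le> norm x * K" for x using bd[of x] by (simp add: mult.commute)
  qed
  have phi0: "\<phi> 0 = 0" by (rule add_zero_fun[OF add])
  define S where "S = {x. \<phi> x = 1}"
  have x1S: "scaleC (1 / \<phi> x1) x1 \<in> S" using x1 by (simp add: S_def sc)
  define d where "d = Inf (norm ` S)"
  have bdd: "bdd_below (norm ` S)" by (rule bdd_belowI[of _ 0]) auto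
  have d_le: "\<And>y. y \<in> S \<Longrightarrow> d \<le> norm y" unfolding d_def
    by (rule cInf_lower) (use bdd in auto)
  have d_nonneg: "0 \<le> d" unfolding d_def
    by (rule cInf_greatest) (use x1S in auto)
  have "\<forall>n::nat. \<exists>y. y \<in> S \<and> norm y < d + inverse (real (Suc n))"
  proof
    fix n :: nat
    have "Inf (norm ` S) < d + inverse (real (Suc n))" unfolding d_def by simp
    then show "\<exists>y. y \<in> S \<and> norm y < d + inverse (real (Suc n))"
      using cInf_less_iff[of "norm ` S"] x1S bdd by auto
  qed
  then obtain X where XS: "\<And>n. X n \<in> S" and Xn: "\<And>n. norm (X n) < d + inverse (real (Suc n))"
    by metis
  have mid: "2 * d \<le> norm (x + y)" if xy: "x \<in> S" "y \<in> S" for x y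
  proof -
    have "scaleR (1/2) (x + y) \<in> S" using xy by (simp add: S_def scaleR_as_C sc add)
    then have "d \<le> norm (scaleR (1/2) (x+y))" by (rule d_le)
    then show "2 * d \<le> norm (x + y)" by simp
  qed
  have dist_bound: "(norm (x - y))^2 \<le> 2*(norm x)^2 + 2*(norm y)^2 - 4*d^2"
    if xy: "x \<in> S" "y \<in> S" for x y
  proof -
    have "(2*d)^2 \<le> (norm (x+y))^2" using mid[OF xy] d_nonneg by (intro power_mono) auto
    then show ?thesis using parallelogram[of x y] by (simp add: power_mult_distrib)
  qed
  have "Cauchy X"
  proof (rule metric_CauchyI)
    fix e :: real assume e: "e > 0"
    define \<delta> where "\<delta> = min 1 (e^2 / (8*d+5))"
    have \<delta>pos: "\<delta> > 0" using e d_nonneg by (simp add: \<delta>_def)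
    obtain M where M: "inverse (real (Suc M)) < \<delta>" using reals_Archimedean[OF \<delta>pos] by blast
    have small: "norm (X m) < d + \<delta>" if "m \<ge> M" for m
    proof -
      have "inverse (real (Suc m)) \<le> inverse (real (Suc M))" using that
        by (simp add: le_imp_inverse_le)
      then show ?thesis using Xn[of m] M by linarith
    qed
    have "\<forall>m\<ge>M. \<forall>n\<ge>M. dist (X m) (X n) < e"
    proof (intro allI impI)
      fix m n assume mn: "m \<ge> M" "n \<ge> M"
      have "(norm (X m - X n))^2 \<le> 2*(norm (X m))^2 + 2*(norm (X n))^2 - 4*d^2"
        by (rule dist_bound[OF XS XS])
      also have "\<dots> \<le> 2*(d+\<delta>)^2 + 2*(d+\<delta>)^2 - 4*d^2"
        using small[OF mn(1)] small[OF mn(2)]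
        by (intro diff_right_mono add_mono mult_left_mono power_mono) auto
      also have "\<dots> = 8*d*\<delta> + 4*\<delta>^2" by (simp add: power2_eq_square algebra_simps)
      also have "\<dots> \<le> \<delta> * (8*d+4)"
      proof -
        have "\<delta> \<le> 1" by (simp add: \<delta>_def)
        then have "\<delta>^2 \<le> \<delta>" using \<delta>pos by (simp add: power2_eq_square mult_le_cancel_left1)
        then show ?thesis by (simp add: algebra_simps)
      qed
      also have "\<dots> < \<delta> * (8*d+5)" using \<delta>pos by simp
      also have "\<dots> \<le> e^2"
      proof -
        have "\<delta> \<le> e^2 / (8*d+5)" by (simp add: \<delta>_def)
        then show ?thesis using d_nonneg by (simp add: field_simps)
      qed
      finally have "(norm (X m - X n))^2 < e^2" .
      then have "norm (X m - X n) < e" using e by (simp add: power2_less_imp_less)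
      then show "dist (X m) (X n) < e" by (simp add: dist_norm)
    qed
    then show "\<exists>M. \<forall>m\<ge>M. \<forall>n\<ge>M. dist (X m) (X n) < e" by blast
  qed
  then obtain x0 where lim: "X \<longlonglongrightarrow> x0"
    using Cauchy_convergent convergent_def by blast
  have "(\<lambda>n. \<phi> (X n)) \<longlonglongrightarrow> \<phi> x0" by (rule bounded_linear.tendsto[OF bl lim])
  moreover have "(\<lambda>n. \<phi> (X n)) = (\<lambda>n. 1)" using XS by (simp add: S_def)
  ultimately have "\<phi> x0 = 1" using LIMSEQ_unique tendsto_const by metis
  then have x0S: "x0 \<in> S" by (simp add: S_def)
  have "norm x0 \<le> d"
  proof (rule LIMSEQ_le[OF tendsto_norm[OF lim] LIMSEQ_inverse_real_of_nat_add[of d]])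
    show "\<exists>N. \<forall>n\<ge>N. norm (X n) \<le> d + inverse (real (Suc n))"
      using Xn less_imp_le by blast
  qed
  then have minim: "\<And>y. y \<in> S \<Longrightarrow> norm x0 \<le> norm y" using d_le by force
  have orth: "cinner x0 n = 0" if "\<phi> n = 0" for n
  proof (cases "n = 0")
    case True then show ?thesis by simp
  next
    case False
    let ?t = "- (cinner x0 n / complex_of_real ((norm n)^2))"
    have "x0 + scaleC ?t n \<in> S" using that x0S by (simp add: S_def add sc)
    then have "norm x0 \<le> norm (x0 + scaleC ?t n)" by (rule minim)
    then have "(norm x0)^2 \<le> (norm (x0 + scaleC ?t n))^2" by (simp add: power_mono)
    then have "(norm x0)^2 \<le> (norm x0)^2 - (cmod (cinner x0 n))^2 / (norm n)^2"
      by (simp only: proj_identity[OF False])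
    then have "(cmod (cinner x0 n))^2 / (norm n)^2 \<le> 0" by linarith
    then have "(cmod (cinner x0 n))^2 \<le> 0" using False by (simp add: divide_le_0_iff)
    then show ?thesis by simp
  qed
  have x0ne: "x0 \<noteq> 0" using \<open>\<phi> x0 = 1\<close> phi0 by auto
  define v where "v = scaleC (complex_of_real (1 / (norm x0)^2)) x0"
  show ?thesis
  proof (intro exI allI)
    fix x
    let ?n = "x - scaleC (\<phi> x) x0"
    have "\<phi> ?n = 0" using \<open>\<phi> x0 = 1\<close> by (simp add: add_diff_fun[OF add] sc)
    then have "cinner x0 ?n = 0" by (rule orth)
    then have "cinner ?n x0 = 0" by (metis cinner_commute complex_cnj_zero)
    then have "cinner x x0 = \<phi> x * cinner x0 x0" by (simp add: cinner_diff_left cinner_scaleC_left)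
    then show "\<phi> x = cinner x v" using x0ne
      by (simp add: v_def cinner_scaleC_right cinner_self field_simps)
  qed
qed


section \<open>Tensor products and the partial inner product\<close>

lemma tp_add1: "is_hilbert_tensor tp \<Longrightarrow> tp (a + a') b = tp a b + tp a' b"
  unfolding is_hilbert_tensor_def by blast

lemma tp_scaleC1: "is_hilbert_tensor tp \<Longrightarrow> tp (scaleC c a) b = scaleC c (tp a b)"
  unfolding is_hilbert_tensor_def by blast

lemma tp_inner: "is_hilbert_tensor tp \<Longrightarrow> cinner (tp a b) (tp c d) = cinner a c * cinner b d"
  unfolding is_hilbert_tensor_def by blast

lemma tp_dense: "is_hilbert_tensor tp \<Longrightarrow> closure (cspan (range (\<lambda>(a, b). tp a b))) = UNIV"
  unfolding is_hilbert_tensor_def by blast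

lemma tp_scaleR1: "is_hilbert_tensor tp \<Longrightarrow> tp (scaleR r a) b = scaleR r (tp a b)"
  by (simp add: scaleR_as_C tp_scaleC1)

lemma tp_zero1: "is_hilbert_tensor tp \<Longrightarrow> tp 0 b = 0"
  using tp_scaleC1[of tp 0 0 b] by simp

lemma norm_tp:
  assumes "is_hilbert_tensor tp"
  shows "norm (tp a b) = norm a * norm b"
proof -
  have "complex_of_real ((norm (tp a b))^2) = complex_of_real ((norm a * norm b)^2)"
    by (simp only: cinner_self[symmetric] tp_inner[OF assms] power_mult_distrib of_real_mult)
  then have "(norm (tp a b))^2 = (norm a * norm b)^2" by (simp only: of_real_eq_iff)
  then show ?thesis by (rule power2_eq_imp_eq) auto
qed

definition pinner :: "('a::chilbert_space \<Rightarrow> 'b::chilbert_space \<Rightarrow> 'h::chilbert_space) \<Rightarrow> 'b \<Rightarrow> 'h \<Rightarrow> 'a"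
  where "pinner tp g u = (SOME v. \<forall>a. cinner (tp a g) u = cinner a v)"

lemma pinner_prop:
  assumes tp: "is_hilbert_tensor tp"
  shows "cinner (tp a g) u = cinner a (pinner tp g u)"
proof -
  have "\<exists>v. \<forall>a. cinner (tp a g) u = cinner a v"
  proof (rule riesz[where K = "norm g * norm u"])
    show "cinner (tp (x + y) g) u = cinner (tp x g) u + cinner (tp y g) u" for x y
      by (simp add: tp_add1[OF tp] cinner_add_left)
    show "cinner (tp (scaleC c x) g) u = c * cinner (tp x g) u" for c x
      by (simp add: tp_scaleC1[OF tp] cinner_scaleC_left)
    show "cmod (cinner (tp x g) u) \<le> norm g * norm u * norm x" for x
      using cauchy_schwarz[of "tp x g" u] by (simp add: norm_tp[OF tp] mult_ac)
  qed
  then have "\<forall>a. cinner (tp a g) u = cinner a (pinner tp g u)"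
    unfolding pinner_def by (rule someI_ex)
  then show ?thesis by blast
qed

lemma pinner_tp:
  assumes tp: "is_hilbert_tensor tp"
  shows "pinner tp g (tp a' b) = scaleC (cinner b g) a'"
proof (rule cinner_ext)
  fix a
  have c: "cnj (cinner b g) = cinner g b" by (metis cinner_commute)
  show "cinner a (pinner tp g (tp a' b)) = cinner a (scaleC (cinner b g) a')"
    by (simp add: pinner_prop[OF tp, symmetric] tp_inner[OF tp] cinner_scaleC_right c mult.commute)
qed

lemma pinner_add:
  assumes tp: "is_hilbert_tensor tp"
  shows "pinner tp g (u + u') = pinner tp g u + pinner tp g u'"
  by (rule cinner_ext) (simp add: pinner_prop[OF tp, symmetric] cinner_add_right)

lemma pinner_scaleC:
  assumes tp: "is_hilbert_tensor tp"
  shows "pinner tp g (scaleC c u) = scaleC c (pinner tp g u)"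
  by (rule cinner_ext) (simp add: pinner_prop[OF tp, symmetric] cinner_scaleC_right)

lemma pinner_norm:
  assumes tp: "is_hilbert_tensor tp"
  shows "norm (pinner tp g u) \<le> norm g * norm u"
proof -
  define p where "p = pinner tp g u"
  have "complex_of_real ((norm p)^2) = cinner (tp p g) u"
    by (simp only: cinner_self[symmetric] pinner_prop[OF tp] p_def)
  then have "(norm p)^2 = cmod (cinner (tp p g) u)"
    by (metis norm_of_real abs_of_nonneg zero_le_power2)
  also have "\<dots> \<le> norm p * (norm g * norm u)"
    using cauchy_schwarz[of "tp p g" u] by (simp add: norm_tp[OF tp] mult_ac)
  finally have "norm p * norm p \<le> norm p * (norm g * norm u)" by (simp add: power2_eq_square)
  then show ?thesis unfolding p_def[symmetric]
    by (cases "norm p = 0") (auto simp: mult_le_cancel_left_pos)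
qed

lemma bl_intro:
  fixes f :: "'a::complex_inner \<Rightarrow> 'b::complex_inner"
  assumes "\<And>x y. f (x + y) = f x + f y" "\<And>c x. f (scaleC c x) = scaleC c (f x)"
    "\<And>x. norm (f x) \<le> K * norm x"
  shows "bounded_linear f"
proof (rule bounded_linear_intro[where K=K])
  show "f (x + y) = f x + f y" for x y by (rule assms(1))
  show "f (r *\<^sub>R x) = r *\<^sub>R f x" for r x by (simp add: scaleR_as_C assms(2))
  show "norm (f x) \<le> norm x * K" for x using assms(3)[of x] by (simp add: mult.commute)
qed

lemma pinner_bl:
  assumes tp: "is_hilbert_tensor tp"
  shows "bounded_linear (pinner tp g)"
  by (rule bl_intro[where K = "norm g"]) (auto simp: pinner_add[OF tp] pinner_scaleC[OF tp]
      intro: order_trans[OF pinner_norm[OF tp]])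

lemma pinner_cont:
  assumes tp: "is_hilbert_tensor tp"
  shows "continuous_on S (pinner tp g)"
  by (rule linear_continuous_on[OF pinner_bl[OF tp]])

lemma partial_inner_eq:
  assumes tp: "is_hilbert_tensor tp"
  shows "partial_inner tp f g = pinner tp g f"
proof -
  let ?P = "\<lambda>L. clinear L \<and> continuous_on UNIV L \<and> (\<forall>a b. L (tp a b) = scaleC (cinner b g) a)"
  have "(THE L. ?P L) = pinner tp g"
  proof (rule the_equality)
    show "?P (pinner tp g)"
      by (auto simp: clinear_def pinner_add[OF tp] pinner_scaleC[OF tp] pinner_tp[OF tp]
          pinner_cont[OF tp])
  next
    fix L assume PL: "?P L"
    have closedset: "closed {x. L x = pinner tp g x}"
      by (rule closed_Collect_eq) (use PL pinner_cont[OF tp] in auto)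
    have span: "cspan (range (\<lambda>(a,b). tp a b)) \<subseteq> {x. L x = pinner tp g x}"
    proof
      fix x assume "x \<in> cspan (range (\<lambda>(a,b). tp a b))"
      then obtain F c where F: "finite F" "F \<subseteq> range (\<lambda>(a,b). tp a b)"
        and x: "x = (\<Sum>v\<in>F. scaleC (c v) v)" by (auto simp: cspan_def)
      have Ladd: "L (x + y) = L x + L y" for x y using PL by (simp add: clinear_def)
      have Lsc: "L (scaleC c x) = scaleC c (L x)" for c x using PL by (simp add: clinear_def)
      have eqv: "L v = pinner tp g v" if "v \<in> F" for v
      proof -
        from that F(2) obtain a b where "v = tp a b" by auto
        then show ?thesis using PL by (simp add: pinner_tp[OF tp])
      qed
      have "L x = (\<Sum>v\<in>F. scaleC (c v) (L v))"
        unfolding x by (simp add: add_sum_fun[of L, OF Ladd] Lsc)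
      also have "\<dots> = (\<Sum>v\<in>F. scaleC (c v) (pinner tp g v))" using eqv by simp
      also have "\<dots> = pinner tp g x"
        unfolding x by (simp add: add_sum_fun[of "pinner tp g", OF pinner_add[OF tp]] pinner_scaleC[OF tp])
      finally show "x \<in> {x. L x = pinner tp g x}" by simp
    qed
    have "closure (cspan (range (\<lambda>(a,b). tp a b))) \<subseteq> {x. L x = pinner tp g x}"
      by (rule closure_minimal[OF span closedset])
    then show "L = pinner tp g" using tp_dense[OF tp] by auto
  qed
  then show ?thesis unfolding partial_inner_def by simp
qed


section \<open>Compact operators\<close>

lemma cop_add: "compact_operator T \<Longrightarrow> T (x + y) = T x + T y"
  by (simp add: compact_operator_def clinear_def)

lemma cop_scaleC: "compact_operator T \<Longrightarrow> T (scaleC c x) = scaleC c (T x)"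
  by (simp add: compact_operator_def clinear_def)

lemma cop_scaleR: "compact_operator T \<Longrightarrow> T (scaleR r x) = scaleR r (T x)"
  by (simp add: scaleR_as_C cop_scaleC)

lemma cop_zero: "compact_operator T \<Longrightarrow> T 0 = 0"
  using cop_scaleC[of T 0 0] by simp

lemma cop_bound:
  assumes "compact_operator T"
  obtains C where "C \<ge> 0" "\<And>x. norm (T x) \<le> C * norm x"
proof -
  have "bounded (closure (T ` ball 0 1))"
    using assms compact_imp_bounded compact_operator_def by blast
  then have "\<exists>C0. \<forall>y\<in>closure (T ` ball 0 1). norm y \<le> C0" by (simp only: bounded_iff)
  then obtain C0 where C0: "\<forall>y\<in>closure (T ` ball 0 1). norm y \<le> C0" by blast
  have C0': "norm (T x) \<le> C0" if "norm x < 1" for x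
  proof -
    have "x \<in> ball 0 1" using that by simp
    then have "T x \<in> T ` ball 0 1" by (rule imageI)
    then have "T x \<in> closure (T ` ball 0 1)" by (rule subsetD[OF closure_subset])
    then show ?thesis using C0 by blast
  qed
  have C0nn: "0 \<le> C0" using C0'[of 0] cop_zero[OF assms] by simp
  have "norm (T x) \<le> (2*C0) * norm x" for x
  proof (cases "x = 0")
    case True thus ?thesis using cop_zero[OF assms] by simp
  next
    case False
    let ?r = "1 / (2 * norm x)"
    have "norm (?r *\<^sub>R x) < 1" using False by simp
    then have "norm (T (?r *\<^sub>R x)) \<le> C0" by (rule C0')
    then have "?r * norm (T x) \<le> C0" by (simp add: cop_scaleR[OF assms])
    then show ?thesis using False by (simp add: field_simps)
  qed
  then show ?thesis using that[of "2*C0"] C0nn by simp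
qed


theorem proposition4p4:
  fixes tp :: "'a::chilbert_space \<Rightarrow> 'b::chilbert_space \<Rightarrow> 'h::chilbert_space"
    and \<mu> :: "'g::{group_add, t2_space} measure"
    and E :: "nat \<Rightarrow> 'g set"
    and \<psi> :: "'g \<Rightarrow> 'b"
    and T :: "'h \<Rightarrow> 'h"
  assumes "separable_type TYPE('a)" and "separable_type TYPE('b)"
    and "locally_compact_group TYPE('g)" and "separable_type TYPE('g)"
    and "is_left_haar \<mu>"
    and "exhausting_seq E"
    and "cont_parseval_frame \<mu> \<psi>"
    and "is_hilbert_tensor tp"
    and "compact_operator T"
    and "\<forall>g. ((\<lambda>z. cinner (\<psi> z) g) \<longlongrightarrow> 0) cocompact"
  shows "weakly_compact tp \<psi> E T"
  proof -
  note tp = assms(8)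
  note cT = assms(9)
  have Tadd: "\<And>x y. T (x + y) = T x + T y" by (rule cop_add[OF cT])
  have Tsc: "\<And>c x. T (scaleC c x) = scaleC c (T x)" by (rule cop_scaleC[OF cT])
  have TscR: "\<And>r x. T (scaleR r x) = scaleR r (T x)" by (rule cop_scaleR[OF cT])
  have Tzero: "T 0 = 0" by (rule cop_zero[OF cT])
  obtain CT where CT: "CT \<ge> 0" "\<And>x. norm (T x) \<le> CT * norm x" using cop_bound[OF cT] by blast
  obtain B where B: "\<And>z. norm (\<psi> z) \<le> B"
    using assms(7) unfolding cont_parseval_frame_def bounded_iff by blast
  have Bnn: "0 \<le> B" using B[of undefined] norm_ge_zero order_trans by blast
  have Tzw: "\<And>z w h. T_zw tp \<psi> T z w h = pinner tp (\<psi> w) (T (tp h (\<psi> z)))"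
    by (simp add: T_zw_def partial_inner_eq[OF tp])
  define K where "K = closure (T ` ball 0 1)"
  have Kc: "compact K" using cT by (simp add: compact_operator_def K_def)
  have inK: "T (tp h (\<psi> z)) \<in> (\<lambda>y. R *\<^sub>R y) ` K" if "norm h < 1" "B < R" for h z R
  proof -
    have R: "R > 0" using Bnn that by linarith
    let ?x = "tp h (\<psi> z)"
    have "norm ?x \<le> norm (\<psi> z)" using that(1) by (simp add: norm_tp[OF tp] mult_left_le_one_le)
    then have nx: "norm ?x < R" using B[of z] that(2) by linarith
    have "(1/R) *\<^sub>R ?x \<in> ball 0 1" using nx R by (simp add: dist_norm field_simps)
    then have "T ((1/R) *\<^sub>R ?x) \<in> T ` ball 0 1" by (rule imageI)
    then have "T ((1/R) *\<^sub>R ?x) \<in> K" unfolding K_def by (rule subsetD[OF closure_subset])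
    moreover have "T ?x = R *\<^sub>R T ((1/R) *\<^sub>R ?x)" using R by (simp add: TscR)
    ultimately show ?thesis by (rule rev_image_eqI)
  qed
  have compactpart: "compact_operator (T_zw tp \<psi> T z w)" for z w
  proof -
    define R where "R = B + 1"
    let ?S = "T_zw tp \<psi> T z w"
    let ?C = "pinner tp (\<psi> w) ` ((\<lambda>y. R *\<^sub>R y) ` K)"
    have Cc: "compact ?C"
      by (rule compact_continuous_image[OF pinner_cont[OF tp] compact_scaling[OF Kc]])
    have "?S ` ball 0 1 \<subseteq> ?C"
    proof
      fix s assume "s \<in> ?S ` ball 0 1"
      then obtain h where h: "norm h < 1" "s = ?S h" by (auto simp: dist_norm)
      have "T (tp h (\<psi> z)) \<in> (\<lambda>y. R *\<^sub>R y) ` K" by (rule inK) (use h R_def in auto)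
      then show "s \<in> ?C" using h by (simp add: Tzw)
    qed
    then have sub: "closure (?S ` ball 0 1) \<subseteq> ?C"
      by (rule closure_minimal) (rule compact_imp_closed[OF Cc])
    then have eqC: "?C \<inter> closure (?S ` ball 0 1) = closure (?S ` ball 0 1)" by (rule Int_absorb1)
    have "compact (?C \<inter> closure (?S ` ball 0 1))" by (rule compact_Int_closed[OF Cc closed_closure])
    then have "compact (closure (?S ` ball 0 1))" by (simp only: eqC)
    moreover have "clinear ?S"
      unfolding clinear_def
      by (simp add: Tzw tp_add1[OF tp] tp_scaleC1[OF tp] Tadd Tsc pinner_add[OF tp] pinner_scaleC[OF tp])
    ultimately show ?thesis by (simp add: compact_operator_def)
  qed
  have pin_lim: "((\<lambda>z. pinner tp (\<psi> z) u) \<longlongrightarrow> 0) cocompact" for u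
  proof -
    have elem: "((\<lambda>z. pinner tp (\<psi> z) v) \<longlongrightarrow> 0) cocompact" if "v \<in> range (\<lambda>(a,b). tp a b)" for v
    proof -
      from that obtain a b where v: "v = tp a b" by auto
      have "((\<lambda>z. cinner (\<psi> z) b) \<longlongrightarrow> 0) cocompact" using assms(10) by blast
      then have "((\<lambda>z. cnj (cinner (\<psi> z) b)) \<longlongrightarrow> cnj 0) cocompact" by (rule tendsto_cnj)
      moreover have "(\<lambda>z. cnj (cinner (\<psi> z) b)) = (\<lambda>z. cinner b (\<psi> z))"
        by (rule ext) (metis cinner_commute)
      ultimately have "((\<lambda>z. cinner b (\<psi> z)) \<longlongrightarrow> 0) cocompact" by simp
      then have lim: "((\<lambda>z. cmod (cinner b (\<psi> z)) * norm a) \<longlongrightarrow> 0) cocompact"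
        by (intro tendsto_mult_left_zero tendsto_norm_zero)
      have eqn: "norm (pinner tp (\<psi> z) v) = cmod (cinner b (\<psi> z)) * norm a" for z
        by (simp add: v pinner_tp[OF tp] norm_scaleC)
      show ?thesis by (subst tendsto_norm_zero_iff[symmetric]) (simp add: eqn lim)
    qed
    have span: "((\<lambda>z. pinner tp (\<psi> z) x) \<longlongrightarrow> 0) cocompact"
      if "x \<in> cspan (range (\<lambda>(a,b). tp a b))" for x
    proof -
      from that obtain F c where F: "finite F" "F \<subseteq> range (\<lambda>(a,b). tp a b)"
        and x: "x = (\<Sum>v\<in>F. scaleC (c v) v)" by (auto simp: cspan_def)
      have eq: "pinner tp (\<psi> z) x = (\<Sum>v\<in>F. scaleC (c v) (pinner tp (\<psi> z) v))" for z
        unfolding x by (simp add: add_sum_fun[of "pinner tp (\<psi> z)", OF pinner_add[OF tp]] pinner_scaleC[OF tp])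
      have "((\<lambda>z. \<Sum>v\<in>F. scaleC (c v) (pinner tp (\<psi> z) v)) \<longlongrightarrow> 0) cocompact"
      proof (rule tendsto_null_sum)
        fix v assume "v \<in> F"
        then have "((\<lambda>z. pinner tp (\<psi> z) v) \<longlongrightarrow> 0) cocompact" using elem F(2) by blast
        then have "((\<lambda>z. norm (pinner tp (\<psi> z) v) * cmod (c v)) \<longlongrightarrow> 0) cocompact"
          by (intro tendsto_mult_left_zero tendsto_norm_zero)
        then show "((\<lambda>z. scaleC (c v) (pinner tp (\<psi> z) v)) \<longlongrightarrow> 0) cocompact"
          by (subst tendsto_norm_zero_iff[symmetric]) (simp add: norm_scaleC mult.commute)
      qed
      then show ?thesis by (simp add: eq)
    qed
    show ?thesis
    proof (rule tendstoI)
      fix e :: real assume e: "e > 0"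
      define \<eta> where "\<eta> = e / (2 * (B + 1))"
      have \<eta>pos: "\<eta> > 0" using e Bnn by (simp add: \<eta>_def)
      have "u \<in> closure (cspan (range (\<lambda>(a,b). tp a b)))" using tp_dense[OF tp] by simp
      then obtain u' where u': "u' \<in> cspan (range (\<lambda>(a,b). tp a b))" "dist u' u < \<eta>"
        using closure_approachable \<eta>pos by blast
      have e2: "e/2 > 0" using e by simp
      have "eventually (\<lambda>z. dist (pinner tp (\<psi> z) u') 0 < e/2) cocompact"
        by (rule tendstoD[OF span[OF u'(1)] e2])
      then show "eventually (\<lambda>z. dist (pinner tp (\<psi> z) u) 0 < e) cocompact"
      proof (rule eventually_mono)
        fix z assume H: "dist (pinner tp (\<psi> z) u') 0 < e/2"
        have "pinner tp (\<psi> z) u = pinner tp (\<psi> z) u' + pinner tp (\<psi> z) (u - u')"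
          by (simp add: pinner_add[OF tp, symmetric])
        then have "norm (pinner tp (\<psi> z) u) \<le> norm (pinner tp (\<psi> z) u') + norm (pinner tp (\<psi> z) (u - u'))"
          by (metis norm_triangle_ineq)
        moreover have "norm (pinner tp (\<psi> z) (u - u')) \<le> B * \<eta>"
        proof -
          have "norm (pinner tp (\<psi> z) (u - u')) \<le> norm (\<psi> z) * norm (u - u')" by (rule pinner_norm[OF tp])
          also have "\<dots> \<le> B * \<eta>" using B[of z] u'(2) Bnn
            by (intro mult_mono) (auto simp: dist_norm norm_minus_commute)
          finally show ?thesis .
        qed
        moreover have "B * \<eta> \<le> e / 2" unfolding \<eta>_def using e Bnn by (simp add: field_simps)
        ultimately show "dist (pinner tp (\<psi> z) u) 0 < e" using H by simp
      qed
    qed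
  qed
  define adj where "adj = (\<lambda>y. SOME u. \<forall>x. cinner (T x) y = cinner x u)"
  have adj: "cinner (T x) y = cinner x (adj y)" for x y
  proof -
    have "\<exists>u. \<forall>x. cinner (T x) y = cinner x u"
    proof (rule riesz[where K = "CT * norm y"])
      show "cinner (T (x + x')) y = cinner (T x) y + cinner (T x') y" for x x'
        by (simp add: Tadd cinner_add_left)
      show "cinner (T (scaleC c x)) y = c * cinner (T x) y" for c x
        by (simp add: Tsc cinner_scaleC_left)
      show "cmod (cinner (T x) y) \<le> CT * norm y * norm x" for x
      proof -
        have "norm (T x) * norm y \<le> CT * norm y * norm x"
          using mult_right_mono[OF CT(2)[of x] norm_ge_zero[of y]] by (simp add: mult_ac)
        then show ?thesis by (rule order_trans[OF cauchy_schwarz])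
      qed
    qed
    then have "\<forall>x. cinner (T x) y = cinner x (adj y)" unfolding adj_def by (rule someI_ex)
    then show ?thesis by blast
  qed
  have D: "eventually (\<lambda>z. \<forall>h. norm h < 1 \<longrightarrow> norm (T (tp h (\<psi> z))) \<le> \<delta>) cocompact"
    if \<delta>: "\<delta> > 0" for \<delta>
  proof -
    define R where "R = B + 1"
    define K' where "K' = (\<lambda>y. R *\<^sub>R y) ` K"
    have K'c: "compact K'" unfolding K'_def by (rule compact_scaling[OF Kc])
    obtain C where C: "\<And>y. y \<in> K' \<Longrightarrow> norm y \<le> C"
      using compact_imp_bounded[OF K'c] unfolding bounded_iff by blast
    have Cp: "\<bar>C\<bar> + 1 > 0" by simp
    define \<eta> where "\<eta> = \<delta>^2 / (\<bar>C\<bar> + 1)"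
    have \<eta>pos: "\<eta> > 0" using \<delta> by (simp add: \<eta>_def)
    have inK': "T (tp h (\<psi> z)) \<in> K'" if "norm h < 1" for h z
      unfolding K'_def by (rule inK) (use that R_def in auto)
    have cover: "K' \<subseteq> (\<Union>y\<in>K'. ball y \<eta>)" using \<eta>pos by auto
    obtain Y where Y: "Y \<subseteq> K'" "finite Y" "K' \<subseteq> (\<Union>y\<in>Y. ball y \<eta>)"
      using compactE_image[OF K'c _ cover] by blast
    have ev: "eventually (\<lambda>z. \<forall>y\<in>Y. norm (pinner tp (\<psi> z) (adj y)) < \<eta>) cocompact"
    proof (rule eventually_ball_finite[OF Y(2)], intro ballI)
      fix y assume "y \<in> Y"
      show "eventually (\<lambda>z. norm (pinner tp (\<psi> z) (adj y)) < \<eta>) cocompact"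
        using tendstoD[OF pin_lim[of "adj y"] \<eta>pos] by simp
    qed
    show ?thesis
    proof (rule eventually_mono[OF ev], intro allI impI)
      fix z :: 'g and h :: 'a assume H: "\<forall>y\<in>Y. norm (pinner tp (\<psi> z) (adj y)) < \<eta>" and h: "norm h < 1"
      define x where "x = tp h (\<psi> z)"
      have TxK: "T x \<in> K'" unfolding x_def by (rule inK'[OF h])
      then obtain y where y: "y \<in> Y" "T x \<in> ball y \<eta>" using Y(3) by blast
      have nTx: "norm (T x) \<le> \<bar>C\<bar>" using C[OF TxK] by linarith
      have e1: "cmod (cinner (T x) (T x - y)) \<le> \<bar>C\<bar> * \<eta>"
      proof -
        have "norm (T x - y) < \<eta>" using y(2) by (simp add: dist_norm norm_minus_commute)
        then have "norm (T x) * norm (T x - y) \<le> \<bar>C\<bar> * \<eta>" using nTx by (intro mult_mono) auto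
        then show ?thesis using cauchy_schwarz[of "T x" "T x - y"] by linarith
      qed
      have e2: "cmod (cinner (T x) y) \<le> \<eta>"
      proof -
        have "cinner (T x) y = cinner h (pinner tp (\<psi> z) (adj y))"
          by (simp add: adj x_def pinner_prop[OF tp])
        then have "cmod (cinner (T x) y) \<le> norm h * norm (pinner tp (\<psi> z) (adj y))"
          using cauchy_schwarz by simp
        also have "\<dots> \<le> 1 * \<eta>" using h H y(1) by (intro mult_mono) auto
        finally show ?thesis by simp
      qed
      have "(norm (T x))^2 = Re (cinner (T x) (T x))" by (simp add: cinner_self)
      also have "\<dots> = Re (cinner (T x) (T x - y)) + Re (cinner (T x) y)"
        by (simp add: cinner_diff_right)
      also have "\<dots> \<le> cmod (cinner (T x) (T x - y)) + cmod (cinner (T x) y)"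
        by (intro add_mono complex_Re_le_cmod)
      also have "\<dots> \<le> \<bar>C\<bar> * \<eta> + \<eta>" using e1 e2 by linarith
      also have "\<dots> = (\<bar>C\<bar> + 1) * \<eta>" by (simp add: algebra_simps)
      also have "\<dots> = \<delta>^2" unfolding \<eta>_def using Cp by simp
      finally have "(norm (T x))^2 \<le> \<delta>^2" .
      then show "norm (T (tp h (\<psi> z))) \<le> \<delta>" unfolding x_def[symmetric]
        by (rule power2_le_imp_le) (use \<delta> in auto)
    qed
  qed
  have main: "eventually (\<lambda>z. \<forall>w. onorm (T_zw tp \<psi> T z w) \<le> \<epsilon>) cocompact" if \<epsilon>: "\<epsilon> > 0" for \<epsilon>
  proof -
    define \<delta> where "\<delta> = \<epsilon> / (2 * (B + 1))"
    have \<delta>pos: "\<delta> > 0" using \<epsilon> Bnn by (simp add: \<delta>_def)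
    have B\<delta>: "B * (2 * \<delta>) \<le> \<epsilon>" unfolding \<delta>_def using \<epsilon> Bnn by (simp add: field_simps)
    show ?thesis
    proof (rule eventually_mono[OF D[OF \<delta>pos]], intro allI)
      fix z w assume H: "\<forall>h. norm h < 1 \<longrightarrow> norm (T (tp h (\<psi> z))) \<le> \<delta>"
      have bnd: "norm (T (tp h (\<psi> z))) \<le> 2 * \<delta> * norm h" for h
      proof (cases "h = 0")
        case True then show ?thesis by (simp add: tp_zero1[OF tp] Tzero)
      next
        case False
        let ?r = "1 / (2 * norm h)"
        have "norm (?r *\<^sub>R h) < 1" using False by simp
        then have "norm (T (tp (?r *\<^sub>R h) (\<psi> z))) \<le> \<delta>" using H by blast
        then have "?r * norm (T (tp h (\<psi> z))) \<le> \<delta>" by (simp add: tp_scaleR1[OF tp] TscR)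
        then show ?thesis using False by (simp add: field_simps)
      qed
      show "onorm (T_zw tp \<psi> T z w) \<le> \<epsilon>"
      proof (rule onorm_bound)
        show "0 \<le> \<epsilon>" using \<epsilon> by simp
        fix h
        have "norm (T_zw tp \<psi> T z w h) \<le> norm (\<psi> w) * norm (T (tp h (\<psi> z)))"
          unfolding Tzw by (rule pinner_norm[OF tp])
        also have "\<dots> \<le> B * (2 * \<delta> * norm h)" using B[of w] bnd[of h] Bnn by (intro mult_mono) auto
        also have "\<dots> \<le> \<epsilon> * norm h"
          using mult_right_mono[OF B\<delta> norm_ge_zero[of h]] by (simp add: mult_ac)
        finally show "norm (T_zw tp \<psi> T z w h) \<le> \<epsilon> * norm h" .
      qed
    qed
  qed
  have part1: "\<forall>z w. compact_operator (T_zw tp \<psi> T z w)" using compactpart by blast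
  have part2: "\<forall>M\<ge>1. \<forall>\<epsilon>>0. eventually (\<lambda>z. \<forall>w \<in> (\<lambda>e. z + e) ` E M. onorm (T_zw tp \<psi> T z w) \<le> \<epsilon>) cocompact"
  proof (intro allI impI)
    fix M :: nat and \<epsilon> :: real assume "1 \<le> M" "0 < \<epsilon>"
    show "eventually (\<lambda>z. \<forall>w \<in> (\<lambda>e. z + e) ` E M. onorm (T_zw tp \<psi> T z w) \<le> \<epsilon>) cocompact"
      by (rule eventually_mono[OF main[OF \<open>0 < \<epsilon>\<close>]]) blast
  qed
  show ?thesis unfolding weakly_compact_def using part1 part2 by blast
qed


end
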